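(* Let $\mathcal M=\mathcal M(\Sigma,I)$ be a trace monoid with M\"obius polynomial $\mu(z)$ and characteristic root $r$. (1) Let $\widetilde\Sigma\subseteq\Sigma$, and let $\widetilde r$ and $\widetilde\mu(z)$ be the characteristic root and M\"obius polynomial of $\widetilde{\mathcal M}=\langle\widetilde\Sigma\rangle$. Then $r\le\widetilde r$; moreover $r<\widetilde r$ if and only if $\widetilde\mu(r)>0$. (2) $\mathcal M$ has the spectral property if and only if $\mathcal M$ is irreducible.
   Context: A trace monoid $\mathcal M=\mathcal M(\Sigma,I)$ is $\langle\Sigma\mid ab=ba\ ((a,b)\in I)\rangle$, $\Sigma$ a finite alphabet, $I$ irreflexive symmetric; $|x|$ is the length of a trace. $\mathcal M$ is irreducible if the graph $(\Sigma,(\Sigma\times\Sigma)\setminus I)$ is connected. For $H\subseteq\Sigma$, $\langle H\rangle$ is the submonoid generated by $H$ (itself the trace monoid $\mathcal M(H,I\cap(H\times H))$). A clique is a trace $a_1\cdots a_p$ of pairwise distinct letters with $(a_i,a_j)\in I$ for $i\ne j$ (including the empty trace); $\mathscr C$ is the set of cliques. The M\"obius polynomial is $\mu(z)=\sum_{c\in\mathscr C}(-1)^{|c|}z^{|c|}$. The characteristic root $r$ is the radius of convergence of the growth series $\sum_{n\ge0}\#\{x\in\mathcal M:|x|=n\}z^n$. $\mathcal M$ has the spectral property if for every $a\in\Sigma$, the characteristic root $r^a$ of $\langle\Sigma\setminus\{a\}\rangle$ satisfies $r^a>r$. *)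

theory Defs
  imports "HOL-Analysis.Analysis"
begin

definition swap_step :: "('a \<times> 'a) set \<Rightarrow> 'a list \<Rightarrow> 'a list \<Rightarrow> bool" where
  "swap_step I u v \<longleftrightarrow>
     (\<exists>xs ys a b. (a, b) \<in> I \<and> u = xs @ [a, b] @ ys \<and> v = xs @ [b, a] @ ys)"

definition trace_equiv :: "('a \<times> 'a) set \<Rightarrow> 'a list \<Rightarrow> 'a list \<Rightarrow> bool" where
  "trace_equiv I = (swap_step I)\<^sup>*\<^sup>*"

definition words :: "'a set \<Rightarrow> nat \<Rightarrow> 'a list set" where
  "words \<Sigma> n = {w. set w \<subseteq> \<Sigma> \<and> length w = n}"

definition traces_of_length :: "'a set \<Rightarrow> ('a \<times> 'a) set \<Rightarrow> nat \<Rightarrow> 'a list set set" where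
  "traces_of_length \<Sigma> I n = (\<lambda>w. {v. trace_equiv I w v}) ` words \<Sigma> n"

definition growth :: "'a set \<Rightarrow> ('a \<times> 'a) set \<Rightarrow> nat \<Rightarrow> real" where
  "growth \<Sigma> I n = real (card (traces_of_length \<Sigma> I n))"

definition char_root :: "'a set \<Rightarrow> ('a \<times> 'a) set \<Rightarrow> ereal" where
  "char_root \<Sigma> I = conv_radius (growth \<Sigma> I)"

text \<open>Cliques, identified with their (finite) sets of pairwise independent letters.\<close>
definition cliques :: "'a set \<Rightarrow> ('a \<times> 'a) set \<Rightarrow> 'a set set" where
  "cliques \<Sigma> I = {C. C \<subseteq> \<Sigma> \<and> (\<forall>a\<in>C. \<forall>b\<in>C. a \<noteq> b \<longrightarrow> (a, b) \<in> I)}"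

definition mobius :: "'a set \<Rightarrow> ('a \<times> 'a) set \<Rightarrow> real \<Rightarrow> real" where
  "mobius \<Sigma> I z = (\<Sum>C\<in>cliques \<Sigma> I. (-1) ^ card C * z ^ card C)"

text \<open>Submonoid generated by H: the trace monoid M(H, I restricted to H).\<close>
definition restr :: "'a set \<Rightarrow> ('a \<times> 'a) set \<Rightarrow> ('a \<times> 'a) set" where
  "restr H I = I \<inter> (H \<times> H)"

definition trace_monoid :: "'a set \<Rightarrow> ('a \<times> 'a) set \<Rightarrow> bool" where
  "trace_monoid \<Sigma> I \<longleftrightarrow> finite \<Sigma> \<and> I \<subseteq> \<Sigma> \<times> \<Sigma> \<and> (\<forall>a. (a, a) \<notin> I) \<and> sym I"

definition irreducible_tm :: "'a set \<Rightarrow> ('a \<times> 'a) set \<Rightarrow> bool" where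
  "irreducible_tm \<Sigma> I \<longleftrightarrow> (\<forall>a\<in>\<Sigma>. \<forall>b\<in>\<Sigma>. (a, b) \<in> ((\<Sigma> \<times> \<Sigma>) - I)\<^sup>*)"

definition spectral_property :: "'a set \<Rightarrow> ('a \<times> 'a) set \<Rightarrow> bool" where
  "spectral_property \<Sigma> I \<longleftrightarrow>
     (\<forall>a\<in>\<Sigma>. char_root (\<Sigma> - {a}) (restr (\<Sigma> - {a}) I) > char_root \<Sigma> I)"

end

theory Submission
  imports Defs "HOL-Complex_Analysis.Complex_Analysis"
begin


definition pf :: "'a \<Rightarrow> 'a \<Rightarrow> 'a list \<Rightarrow> 'a list" where
  "pf a b w = filter (\<lambda>c. c = a \<or> c = b) w"

definition peq :: "('a \<times> 'a) set \<Rightarrow> 'a list \<Rightarrow> 'a list \<Rightarrow> bool" where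
  "peq J u v \<longleftrightarrow> (\<forall>a b. (a, b) \<notin> J \<longrightarrow> pf a b u = pf a b v)"

lemma pf_simps[simp]: "pf a b [] = []"
  "pf a b (x # xs) = (if x = a \<or> x = b then x # pf a b xs else pf a b xs)"
  "pf a b (xs @ ys) = pf a b xs @ pf a b ys"
  by (simp_all add: pf_def)

lemma pf_sym: "pf a b = pf b a"
  unfolding pf_def by (rule ext, rule filter_cong) auto

lemma peq_refl[simp]: "peq J u u" by (simp add: peq_def)
lemma peq_sym: "peq J u v \<Longrightarrow> peq J v u" by (simp add: peq_def)
lemma peq_trans: "peq J u v \<Longrightarrow> peq J v w \<Longrightarrow> peq J u w" by (simp add: peq_def)
lemma peq_Cons: "peq J u v \<Longrightarrow> peq J (x # u) (x # v)" by (simp add: peq_def)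
lemma peq_append_left: "peq J u v \<Longrightarrow> peq J (l @ u) (l @ v)" by (simp add: peq_def)
lemma peq_cancel: "peq J (l @ u) (l @ v) \<Longrightarrow> peq J u v" by (simp add: peq_def)
lemma peq_cancel1: "peq J (x # u) (x # v) \<Longrightarrow> peq J u v"
  using peq_cancel[of J "[x]"] by simp

lemma peq_mset:
  assumes irr: "\<forall>a. (a, a) \<notin> J" and "peq J u v"
  shows "mset u = mset v"
proof (rule multiset_eqI)
  fix a
  have "pf a a u = pf a a v" using assms by (simp add: peq_def)
  hence "filter ((=) a) u = filter ((=) a) v"
    unfolding pf_def by (metis (mono_tags, lifting) filter_cong)
  thus "count (mset u) a = count (mset v) a" by (simp add: count_mset count_list_eq_length_filter)
qed

lemma peq_set: "\<forall>a. (a, a) \<notin> J \<Longrightarrow> peq J u v \<Longrightarrow> set u = set v"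
  by (metis peq_mset set_mset_mset)
lemma peq_length: "\<forall>a. (a, a) \<notin> J \<Longrightarrow> peq J u v \<Longrightarrow> length u = length v"
  by (metis peq_mset size_mset)

lemma swap_peq:
  assumes sym: "sym J" and irr: "\<forall>a. (a, a) \<notin> J" and st: "swap_step J u v"
  shows "peq J u v"
  unfolding peq_def
proof (intro allI impI)
  fix c d assume cd: "(c, d) \<notin> J"
  from st obtain xs ys a b where ab: "(a, b) \<in> J" and u: "u = xs @ [a, b] @ ys"
    and v: "v = xs @ [b, a] @ ys" by (auto simp: swap_step_def)
  have ba: "(b, a) \<in> J" using sym ab by (auto dest: symD)
  have "a \<noteq> b" using ab irr by auto
  show "pf c d u = pf c d v" using cd ab ba irr \<open>a \<noteq> b\<close> unfolding u v by auto
qed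

lemma trace_equiv_peq:
  assumes "sym J" "\<forall>a. (a, a) \<notin> J" "trace_equiv J u v"
  shows "peq J u v"
  using assms(3) unfolding trace_equiv_def
proof (induction rule: rtranclp_induct)
  case base then show ?case by simp
next
  case (step y z) then show ?case using swap_peq[OF assms(1,2)] peq_trans by blast
qed

lemma swap_step_Cons:
  assumes "swap_step J u v" shows "swap_step J (x # u) (x # v)"
proof -
  from assms obtain xs ys a b where h: "(a, b) \<in> J" "u = xs @ [a, b] @ ys" "v = xs @ [b, a] @ ys"
    unfolding swap_step_def by blast
  show ?thesis unfolding swap_step_def
    by (rule exI[of _ "x # xs"], rule exI[of _ ys], rule exI[of _ a], rule exI[of _ b]) (simp add: h)
qed

lemma trace_equiv_Cons: "trace_equiv J u v \<Longrightarrow> trace_equiv J (x # u) (x # v)"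
  unfolding trace_equiv_def
proof (induction rule: rtranclp_induct)
  case base then show ?case by simp
next
  case (step y z) then show ?case using rtranclp.rtrancl_into_rtrancl[OF step.IH swap_step_Cons[OF step.hyps(2)]]
    by simp
qed

lemma trace_equiv_trans: "trace_equiv J u v \<Longrightarrow> trace_equiv J v w \<Longrightarrow> trace_equiv J u w"
  unfolding trace_equiv_def by simp

lemma trace_equiv_move:
  assumes "\<forall>c\<in>set v1. (c, a) \<in> J"
  shows "trace_equiv J (v1 @ a # v2) (a # v1 @ v2)"
  using assms
proof (induction v1)
  case Nil then show ?case by (simp add: trace_equiv_def)
next
  case (Cons c v1)
  have 1: "trace_equiv J (c # v1 @ a # v2) (c # a # v1 @ v2)"
    using Cons by (simp add: trace_equiv_Cons)
  have "swap_step J (c # a # v1 @ v2) (a # c # v1 @ v2)"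
    unfolding swap_step_def using Cons.prems
    by (intro exI[of _ "[]"] exI[of _ "v1 @ v2"] exI[of _ c] exI[of _ a]) auto
  hence "trace_equiv J (c # a # v1 @ v2) (a # c # v1 @ v2)"
    unfolding trace_equiv_def by simp
  then show ?case using 1 trace_equiv_trans by fastforce
qed

lemma peq_Nil: assumes "\<forall>a. (a, a) \<notin> J" "peq J [] v" shows "v = []"
proof -
  have "length v = 0" using peq_length[OF assms] by simp
  thus ?thesis by simp
qed

lemma swap_step_sym:
  assumes "sym J" "swap_step J u v" shows "swap_step J v u"
proof -
  from assms(2) obtain xs ys a b where h: "(a, b) \<in> J" "u = xs @ [a, b] @ ys" "v = xs @ [b, a] @ ys"
    unfolding swap_step_def by blast
  have "(b, a) \<in> J" using assms(1) h(1) by (rule symD)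
  then show ?thesis unfolding swap_step_def
    by (intro exI[of _ xs] exI[of _ ys] exI[of _ b] exI[of _ a]) (simp add: h)
qed

lemma trace_equiv_sym:
  assumes "sym J" "trace_equiv J u v" shows "trace_equiv J v u"
  using assms(2) unfolding trace_equiv_def
proof (induction rule: rtranclp_induct)
  case base then show ?case by simp
next
  case (step y z) then show ?case using swap_step_sym[OF assms(1)]
    by (meson converse_rtranclp_into_rtranclp)
qed

lemma peq_trace_equiv:
  assumes sym: "sym J" and irr: "\<forall>a. (a, a) \<notin> J"
  shows "peq J u v \<Longrightarrow> trace_equiv J u v"
proof (induction u arbitrary: v)
  case Nil from peq_Nil[OF irr Nil] show ?case by (simp add: trace_equiv_def)
next
  case (Cons a u)
  have "a \<in> set v" using peq_set[OF irr Cons.prems] by auto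
  then obtain v1 v2 where v: "v = v1 @ a # v2" and a1: "a \<notin> set v1"
    by (meson split_list_first)
  have ind: "(c, a) \<in> J" if "c \<in> set v1" for c
  proof (rule ccontr)
    assume "(c, a) \<notin> J"
    hence e: "pf c a (a # u) = pf c a v" using Cons.prems unfolding peq_def by blast
    have c1: "c \<in> set (pf c a v1)" using that by (simp add: pf_def)
    have a2: "a \<notin> set (pf c a v1)" using a1 by (simp add: pf_def)
    from e have "a # pf c a u = pf c a v1 @ a # pf c a v2" unfolding v by simp
    then show False using c1 a2 by (cases "pf c a v1") auto
  qed
  have allc: "\<forall>c\<in>set v1. (c, a) \<in> J" using ind by blast
  have m: "trace_equiv J v (a # v1 @ v2)" unfolding v by (rule trace_equiv_move[OF allc])
  have "peq J v (a # v1 @ v2)" by (rule trace_equiv_peq[OF sym irr m])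
  hence "peq J (a # u) (a # v1 @ v2)" by (rule peq_trans[OF Cons.prems])
  hence "peq J u (v1 @ v2)" by (rule peq_cancel1)
  hence "trace_equiv J u (v1 @ v2)" by (rule Cons.IH)
  hence t1: "trace_equiv J (a # u) (a # v1 @ v2)" by (rule trace_equiv_Cons)
  have t2: "trace_equiv J (a # v1 @ v2) v" by (rule trace_equiv_sym[OF sym m])
  show ?case by (rule trace_equiv_trans[OF t1 t2])
qed

lemma trace_equiv_iff:
  "sym J \<Longrightarrow> \<forall>a. (a, a) \<notin> J \<Longrightarrow> trace_equiv J u v \<longleftrightarrow> peq J u v"
  using peq_trace_equiv trace_equiv_peq by blast


definition cnd :: "('a \<times> 'a) set \<Rightarrow> 'a \<Rightarrow> 'a list \<Rightarrow> bool" where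
  "cnd J a x \<longleftrightarrow> (\<forall>b. (a, b) \<notin> J \<longrightarrow> (\<exists>z. pf a b x = a # z))"

lemma cnd_peq: assumes p: "peq J x x'" shows "cnd J a x \<longleftrightarrow> cnd J a x'"
proof -
  have "\<forall>b. (a, b) \<notin> J \<longrightarrow> pf a b x = pf a b x'" using p unfolding peq_def by blast
  thus ?thesis unfolding cnd_def by auto
qed

lemma cnd_set: assumes irr: "\<forall>a. (a, a) \<notin> J" and c: "cnd J a x" shows "a \<in> set x"
proof -
  obtain z where "pf a a x = a # z" using c irr unfolding cnd_def by blast
  hence "a \<in> set (pf a a x)" by simp
  thus ?thesis by (simp add: pf_def)
qed

lemma cnd_hd: "cnd J a (a # x)"
  unfolding cnd_def by simp

lemma cnd_Nil: "\<forall>a. (a, a) \<notin> J \<Longrightarrow> \<not> cnd J a []"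
  using cnd_set[of J a "[]"] by auto

lemma cnd_clique:
  assumes sym: "sym J" and "cnd J a x" "cnd J c x" "a \<noteq> c"
  shows "(a, c) \<in> J"
proof (rule ccontr)
  assume n: "(a, c) \<notin> J"
  hence n2: "(c, a) \<notin> J" using sym by (auto dest: symD)
  obtain z where z: "pf a c x = a # z" using assms(2) n unfolding cnd_def by blast
  obtain z' where z': "pf c a x = c # z'" using assms(3) n2 unfolding cnd_def by blast
  show False using z z' pf_sym[of a c] assms(4) by simp
qed

lemma cnd_imp_peq:
  assumes sym: "sym J" and irr: "\<forall>a. (a, a) \<notin> J" and c: "cnd J a x"
  shows "\<exists>y. peq J x (a # y)"
proof -
  have "a \<in> set x" using cnd_set[OF irr c] .
  then obtain x1 x2 where x: "x = x1 @ a # x2" and a1: "a \<notin> set x1"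
    by (meson split_list_first)
  have ind: "(d, a) \<in> J" if "d \<in> set x1" for d
  proof (rule ccontr)
    assume "(d, a) \<notin> J"
    hence "(a, d) \<notin> J" using sym by (auto dest: symD)
    then obtain z where e: "pf a d x = a # z" using c unfolding cnd_def by blast
    have c1: "d \<in> set (pf a d x1)" using that by (simp add: pf_def)
    have a2: "a \<notin> set (pf a d x1)" using a1 by (simp add: pf_def)
    from e have "a # z = pf a d x1 @ a # pf a d x2" unfolding x by simp
    then show False using c1 a2 by (cases "pf a d x1") auto
  qed
  have allc: "\<forall>d\<in>set x1. (d, a) \<in> J" using ind by blast
  have "trace_equiv J x (a # x1 @ x2)" unfolding x by (rule trace_equiv_move[OF allc])
  hence "peq J x (a # (x1 @ x2))" using trace_equiv_peq[OF sym irr] by simp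
  thus ?thesis by (rule exI)
qed

lemma peq_imp_cnd: "peq J x (a # y) \<Longrightarrow> cnd J a x"
  unfolding cnd_def peq_def by simp

lemma cnd_iff: "sym J \<Longrightarrow> \<forall>a. (a, a) \<notin> J \<Longrightarrow> cnd J a x \<longleftrightarrow> (\<exists>y. peq J x (a # y))"
proof
  assume "sym J" "\<forall>a. (a, a) \<notin> J" "cnd J a x"
  then show "\<exists>y. peq J x (a # y)" by (rule cnd_imp_peq)
next
  assume "\<exists>y. peq J x (a # y)"
  then obtain y where "peq J x (a # y)" ..
  then show "cnd J a x" by (rule peq_imp_cnd)
qed

definition indep_list :: "('a \<times> 'a) set \<Rightarrow> 'a list \<Rightarrow> bool" where
  "indep_list J l \<longleftrightarrow> distinct l \<and> (\<forall>a\<in>set l. \<forall>b\<in>set l. a \<noteq> b \<longrightarrow> (a, b) \<in> J)"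

lemma pf_single:
  assumes "distinct l" "c \<in> set l" "\<forall>d\<in>set l. d = b \<longrightarrow> d = c"
  shows "pf c b l = [c]"
  using assms
proof (induction l)
  case Nil then show ?case by simp
next
  case (Cons x l)
  have dl: "distinct l" and xl: "x \<notin> set l" using Cons.prems(1) by simp_all
  have hb: "\<forall>d\<in>set l. d = b \<longrightarrow> d = c" using Cons.prems(3) by simp
  show ?case
  proof (cases "x = c")
    case True
    have cl: "c \<notin> set l" using xl True by simp
    have "\<forall>d\<in>set l. \<not> (d = c \<or> d = b)" using cl hb by blast
    hence "filter (\<lambda>d. d = c \<or> d = b) l = []" by (rule filter_False)
    hence "pf c b l = []" unfolding pf_def .
    then show ?thesis using True by simp
  next
    case False
    have xb: "x \<noteq> b" using False Cons.prems(3) by auto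
    have cl: "c \<in> set l" using False Cons.prems(2) by simp
    have "pf c b l = [c]" by (rule Cons.IH[OF dl cl hb])
    then show ?thesis using False xb by simp
  qed
qed

lemma K1:
  assumes il: "indep_list J l" and p: "peq J x (l @ y)" and c: "c \<in> set l"
  shows "cnd J c x"
proof -
  have h: "cnd J c (l @ y)" unfolding cnd_def
  proof (intro allI impI)
    fix b assume "(c, b) \<notin> J"
    have dl: "distinct l" using il unfolding indep_list_def by simp
    have "\<forall>d\<in>set l. d = b \<longrightarrow> d = c"
    proof (intro ballI impI)
      fix d assume "d \<in> set l" "d = b"
      show "d = c"
      proof (rule ccontr)
        assume "d \<noteq> c"
        hence "(c, d) \<in> J" using il c \<open>d \<in> set l\<close> unfolding indep_list_def by auto
        thus False using \<open>(c, b) \<notin> J\<close> \<open>d = b\<close> by simp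
      qed
    qed
    hence "pf c b l = [c]" by (rule pf_single[OF dl c])
    thus "\<exists>z. pf c b (l @ y) = c # z" by simp
  qed
  show ?thesis by (rule iffD2[OF cnd_peq[OF p] h])
qed

lemma K2:
  assumes sym: "sym J" and irr: "\<forall>a. (a, a) \<notin> J"
  shows "indep_list J l \<Longrightarrow> \<forall>c\<in>set l. cnd J c x \<Longrightarrow> \<exists>y. peq J x (l @ y)"
proof (induction l arbitrary: x)
  case Nil then show ?case by (intro exI[of _ x]) simp
next
  case (Cons a l)
  have cax: "cnd J a x" using Cons.prems(2) by simp
  from cnd_imp_peq[OF sym irr cax] obtain y1 where y1: "peq J x (a # y1)" ..
  have il: "indep_list J l" using Cons.prems(1) unfolding indep_list_def by auto
  have "cnd J c y1" if c: "c \<in> set l" for c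
  proof -
    have ca: "cnd J c (a # y1)" using cnd_peq[OF y1] Cons.prems(2) c by auto
    have ac: "a \<noteq> c" using Cons.prems(1) c unfolding indep_list_def by auto
    have "(c, a) \<in> J" using Cons.prems(1) c ac unfolding indep_list_def by auto
    show ?thesis unfolding cnd_def
    proof (intro allI impI)
      fix b assume cb: "(c, b) \<notin> J"
      then have "a \<noteq> b" using \<open>(c, a) \<in> J\<close> by auto
      then show "\<exists>z. pf c b y1 = c # z" using ca cb ac unfolding cnd_def by auto
    qed
  qed
  hence "\<forall>c\<in>set l. cnd J c y1" by blast
  from Cons.IH[OF il this] obtain y where "peq J y1 (l @ y)" ..
  hence "peq J (a # y1) ((a # l) @ y)" by (simp add: peq_Cons)
  hence "peq J x ((a # l) @ y)" by (rule peq_trans[OF y1])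
  thus ?case by (rule exI)
qed


definition cls :: "('a \<times> 'a) set \<Rightarrow> 'a list \<Rightarrow> 'a list set" where
  "cls J w = {v. trace_equiv J w v}"

definition enumc :: "'a set \<Rightarrow> 'a list" where
  "enumc C = (SOME l. distinct l \<and> set l = C)"

definition rep :: "'a list set \<Rightarrow> 'a list" where
  "rep Y = (SOME y. y \<in> Y)"

lemma enumc: assumes "finite C" shows "distinct (enumc C) \<and> set (enumc C) = C"
proof -
  obtain l where "set l = C" "distinct l" using finite_distinct_list[OF assms] by blast
  hence "\<exists>l. distinct l \<and> set l = C" by blast
  thus ?thesis unfolding enumc_def by (rule someI_ex)
qed

lemma traces_of_length_cls: "traces_of_length S J n = cls J ` words S n"
  unfolding traces_of_length_def cls_def by simp

context
  fixes J :: "('a \<times> 'a) set"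
  assumes sym: "sym J" and irr: "\<forall>a. (a, a) \<notin> J"
begin

lemma cls_peq: "cls J w = {v. peq J w v}"
  unfolding cls_def by (rule arg_cong[where f=Collect], rule ext, rule trace_equiv_iff[OF sym irr])

lemma cls_eq: "cls J u = cls J v \<longleftrightarrow> peq J u v"
proof
  assume e: "cls J u = cls J v"
  have "v \<in> cls J v" by (simp add: cls_peq)
  hence "v \<in> cls J u" using e by simp
  thus "peq J u v" by (simp add: cls_peq)
next
  assume "peq J u v"
  then show "cls J u = cls J v" unfolding cls_peq using peq_trans peq_sym by blast
qed

lemma rep_cls: "peq J y (rep (cls J y))"
proof -
  have "y \<in> cls J y" by (simp add: cls_peq)
  hence "rep (cls J y) \<in> cls J y" unfolding rep_def by (rule someI)
  thus ?thesis by (simp add: cls_peq)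
qed

lemma pow_alt:
  assumes "finite M"
  shows "(\<Sum>C\<in>Pow M. (-1::real) ^ card C) = (if M = {} then 1 else 0)"
  using assms
proof (induction M rule: finite_induct)
  case empty then show ?case by simp
next
  case (insert a M)
  have "Pow (insert a M) = Pow M \<union> insert a ` Pow M" by (rule Pow_insert)
  moreover have "Pow M \<inter> insert a ` Pow M = {}" using insert.hyps by auto
  moreover have "inj_on (insert a) (Pow M)" using insert.hyps
    unfolding inj_on_def by (metis Pow_iff insert_absorb insert_ident subset_iff)
  ultimately have "(\<Sum>C\<in>Pow (insert a M). (-1::real) ^ card C)
      = (\<Sum>C\<in>Pow M. (-1::real) ^ card C) + (\<Sum>C\<in>Pow M. (-1::real) ^ card (insert a C))"
    using insert.hyps by (simp add: sum.union_disjoint sum.reindex)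
  also have "(\<Sum>C\<in>Pow M. (-1::real) ^ card (insert a C)) = - (\<Sum>C\<in>Pow M. (-1::real) ^ card C)"
  proof (subst sum_negf[symmetric], rule sum.cong[OF refl])
    fix C assume "C \<in> Pow M"
    hence "finite C" "a \<notin> C" using insert.hyps finite_subset by auto
    thus "(-1::real) ^ card (insert a C) = - ((-1) ^ card C)" by simp
  qed
  finally show ?case by simp
qed

lemma mobius_rec:
  assumes fin: "finite S"
  shows "(\<Sum>C\<in>cliques S J. (-1) ^ card C *
            (if card C \<le> n then real (card (cls J ` words S (n - card C))) else 0))
         = (if n = 0 then 1 else 0)"
proof -
  define K where "K = {C \<in> cliques S J. card C \<le> n}"
  define T where "T m = cls J ` words S m" for m
  define P where "P = Sigma K (\<lambda>C. T (n - card C))"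
  define \<phi> where "\<phi> p = cls J (enumc (fst p) @ rep (snd p))" for p
  have finW: "finite (words S m)" for m
    unfolding words_def using finite_lists_length_eq[OF fin] by simp
  have finT: "finite (T m)" for m unfolding T_def using finW by simp
  have finCl: "finite (cliques S J)" unfolding cliques_def using fin by simp
  have finK: "finite K" unfolding K_def using finCl by simp
  have finP: "finite P" unfolding P_def using finK finT by simp
  have cfin: "finite C" if "C \<in> cliques S J" for C
    using that fin finite_subset unfolding cliques_def by blast
  have "(\<Sum>C\<in>cliques S J. (-1) ^ card C *
            (if card C \<le> n then real (card (cls J ` words S (n - card C))) else 0))
        = (\<Sum>C\<in>K. (-1) ^ card C * real (card (T (n - card C))))"
    unfolding K_def T_def using finCl
    by (simp add: sum.inter_filter if_distrib cong: if_cong)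
  also have "\<dots> = (\<Sum>C\<in>K. \<Sum>Y\<in>T (n - card C). (-1) ^ card C)"
    by (simp add: mult.commute)
  also have "\<dots> = (\<Sum>p\<in>P. (-1) ^ card (fst p))"
    unfolding P_def using finK finT by (subst sum.Sigma) (auto simp: case_prod_beta)
  also have "\<dots> = (\<Sum>X\<in>T n. \<Sum>p\<in>{p\<in>P. \<phi> p = X}. (-1) ^ card (fst p))"
  proof (rule sum.group[symmetric, OF finP finT])
    show "\<phi> ` P \<subseteq> T n"
    proof
      fix X assume "X \<in> \<phi> ` P"
      then obtain C Y where CY: "(C, Y) \<in> P" and X: "X = \<phi> (C, Y)" by auto
      from CY have C: "C \<in> cliques S J" "card C \<le> n" and Y: "Y \<in> T (n - card C)"
        unfolding P_def K_def by auto
      from Y obtain y where y: "y \<in> words S (n - card C)" and Yy: "Y = cls J y"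
        unfolding T_def by auto
      have e: "distinct (enumc C) \<and> set (enumc C) = C" using enumc cfin C by blast
      have py: "peq J y (rep Y)" using rep_cls Yy by simp
      have "enumc C @ rep Y \<in> words S n"
        using y C e peq_set[OF irr py] peq_length[OF irr py] distinct_card[of "enumc C"]
        unfolding words_def cliques_def by auto
      thus "X \<in> T n" unfolding X \<phi>_def T_def by simp
    qed
  qed
  also have "\<dots> = (\<Sum>X\<in>T n. (if n = 0 then 1 else 0))"
  proof (rule sum.cong[OF refl])
    fix X assume "X \<in> T n"
    then obtain x where x: "x \<in> words S n" and Xx: "X = cls J x" unfolding T_def by auto
    define M where "M = {a. cnd J a x}"
    have MS: "M \<subseteq> set x" unfolding M_def using cnd_set[OF irr] by blast
    have finM: "finite M" using MS finite_subset by blast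
    have bij: "bij_betw fst {p\<in>P. \<phi> p = X} (Pow M)"
    proof (rule bij_betwI')
      fix p q assume p: "p \<in> {p\<in>P. \<phi> p = X}" and q: "q \<in> {p\<in>P. \<phi> p = X}"
      show "(fst p = fst q) = (p = q)"
      proof
        assume fe: "fst p = fst q"
        obtain C Y where pCY: "p = (C, Y)" by fastforce
        obtain Y' where qCY: "q = (C, Y')" using fe pCY by (cases q) auto
        from p q have "Y \<in> T (n - card C)" "Y' \<in> T (n - card C)"
          unfolding pCY qCY P_def by auto
        then obtain y y' where Yy: "Y = cls J y" and Yy': "Y' = cls J y'"
          unfolding T_def by auto
        from p q have "cls J (enumc C @ rep Y) = cls J (enumc C @ rep Y')"
          unfolding pCY qCY \<phi>_def by simp
        hence "peq J (enumc C @ rep Y) (enumc C @ rep Y')" using cls_eq by blast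
        hence "peq J (rep Y) (rep Y')" by (rule peq_cancel)
        hence "peq J y y'" using rep_cls Yy Yy' peq_trans peq_sym by metis
        hence "Y = Y'" using Yy Yy' cls_eq by simp
        thus "p = q" using pCY qCY by simp
      qed simp
    next
      fix p assume p: "p \<in> {p\<in>P. \<phi> p = X}"
      obtain C Y where pCY: "p = (C, Y)" by fastforce
      from p have C: "C \<in> cliques S J" unfolding pCY P_def K_def by auto
      have e: "distinct (enumc C) \<and> set (enumc C) = C" using enumc cfin C by blast
      hence il: "indep_list J (enumc C)" using C unfolding indep_list_def cliques_def by auto
      from p have "cls J (enumc C @ rep Y) = cls J x" unfolding pCY \<phi>_def Xx by simp
      hence "peq J x (enumc C @ rep Y)" using cls_eq peq_sym by blast
      hence "\<forall>c\<in>C. cnd J c x" using K1[OF il] e by blast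
      thus "fst p \<in> Pow M" unfolding pCY M_def by auto
    next
      fix C assume "C \<in> Pow M"
      hence CM: "C \<subseteq> M" by simp
      have Cfin: "finite C" using CM finM finite_subset by blast
      have e: "distinct (enumc C) \<and> set (enumc C) = C" using enumc Cfin by blast
      have xS: "set x \<subseteq> S" "length x = n" using x unfolding words_def by auto
      have CS: "C \<subseteq> S" using CM MS xS by auto
      have "\<forall>a\<in>C. \<forall>b\<in>C. a \<noteq> b \<longrightarrow> (a, b) \<in> J"
      proof (intro ballI impI)
        fix a b assume "a \<in> C" "b \<in> C" "a \<noteq> b"
        then have "cnd J a x" "cnd J b x" using CM unfolding M_def by auto
        then show "(a, b) \<in> J" using cnd_clique[OF sym] \<open>a \<noteq> b\<close> by blast
      qed
      hence Ccl: "C \<in> cliques S J" using CS unfolding cliques_def by blast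
      have il: "indep_list J (enumc C)" using Ccl e unfolding indep_list_def cliques_def by auto
      have "\<forall>c\<in>set (enumc C). cnd J c x" using CM e unfolding M_def by auto
      from K2[OF sym irr il this] obtain y where py: "peq J x (enumc C @ y)" ..
      have cardC: "card C = length (enumc C)" using e distinct_card by metis
      have sy: "set y \<subseteq> S" using peq_set[OF irr py] xS by auto
      have ly: "length y = n - card C" "card C \<le> n"
        using peq_length[OF irr py] xS cardC by auto
      have yw: "y \<in> words S (n - card C)" using sy ly unfolding words_def by auto
      have inP: "(C, cls J y) \<in> P" unfolding P_def K_def T_def using Ccl ly yw by auto
      have "peq J (enumc C @ y) (enumc C @ rep (cls J y))"
        using rep_cls peq_append_left by blast
      hence "\<phi> (C, cls J y) = X" unfolding \<phi>_def Xx using py cls_eq peq_trans peq_sym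
        by (metis fst_conv snd_conv)
      thus "\<exists>p\<in>{p\<in>P. \<phi> p = X}. C = fst p" using inP by force
    qed
    have "(\<Sum>p\<in>{p\<in>P. \<phi> p = X}. (-1::real) ^ card (fst p)) = (\<Sum>C\<in>Pow M. (-1) ^ card C)"
      using sum.reindex_bij_betw[OF bij, of "\<lambda>C. (-1::real) ^ card C"] by simp
    also have "\<dots> = (if M = {} then 1 else 0)" using pow_alt[OF finM] .
    also have "(M = {}) = (n = 0)"
    proof
      assume "M = {}"
      show "n = 0"
      proof (rule ccontr)
        assume "n \<noteq> 0"
        then obtain a x' where "x = a # x'" using x unfolding words_def by (cases x) auto
        hence "a \<in> M" unfolding M_def using cnd_hd by simp
        thus False using \<open>M = {}\<close> by simp
      qed
    next
      assume "n = 0"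
      hence "x = []" using x unfolding words_def by simp
      thus "M = {}" using MS by simp
    qed
    finally show "(\<Sum>p\<in>{p\<in>P. \<phi> p = X}. (-1::real) ^ card (fst p)) = (if n = 0 then 1 else 0)" .
  qed
  also have "\<dots> = (if n = 0 then 1 else 0)"
  proof (cases "n = 0")
    case True
    have "words S 0 = {[]}" unfolding words_def by auto
    hence "T n = {cls J []}" unfolding T_def True by simp
    then show ?thesis using True by simp
  qed simp
  finally show ?thesis .
qed

end


definition mobg :: "'a set \<Rightarrow> ('a \<times> 'a) set \<Rightarrow> 'b::real_normed_field \<Rightarrow> 'b" where
  "mobg S J z = (\<Sum>C\<in>cliques S J. (-1) ^ card C * z ^ card C)"

lemma mobg_real: "mobg S J (x::real) = mobius S J x"
  unfolding mobg_def mobius_def by simp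

lemma mobg_of_real: "mobg S J (of_real x :: 'b::real_normed_field) = of_real (mobius S J x)"
  unfolding mobg_def mobius_def by simp

lemma conv_radius_of_real:
  "conv_radius (\<lambda>n. of_real (f n) :: 'b::{real_normed_field,banach}) = conv_radius (f :: nat \<Rightarrow> real)"
proof -
  have "conv_radius (\<lambda>n. of_real (f n) :: 'b) = conv_radius (\<lambda>n. norm (of_real (f n) :: 'b))"
    by (rule conv_radius_norm[symmetric])
  also have "(\<lambda>n. norm (of_real (f n) :: 'b)) = (\<lambda>n. norm (f n))" by simp
  also have "conv_radius (\<lambda>n. norm (f n)) = conv_radius f" by (rule conv_radius_norm)
  finally show ?thesis .
qed

lemma growth_nonneg: "growth S J n \<ge> 0" by (simp add: growth_def)

lemma growth_alt: "growth S J n = real (card (cls J ` words S n))"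
  unfolding growth_def traces_of_length_cls ..

lemma finite_words: assumes "finite S" shows "finite (words S n)"
  unfolding words_def by (rule finite_lists_length_eq[OF assms])

lemma growth_le: "finite S \<Longrightarrow> growth S J n \<le> real (card S) ^ n"
proof -
  assume fin: "finite S"
  have "card (cls J ` words S n) \<le> card (words S n)" by (rule card_image_le[OF finite_words[OF fin]])
  also have "card (words S n) = card S ^ n" unfolding words_def using card_lists_length_eq[OF fin] by simp
  finally have "real (card (cls J ` words S n)) \<le> real (card S ^ n)" by (rule of_nat_mono)
  thus ?thesis unfolding growth_alt by simp
qed

lemma growth_ge1: "finite S \<Longrightarrow> S \<noteq> {} \<Longrightarrow> growth S J n \<ge> 1"
proof -
  assume fin: "finite S" and ne: "S \<noteq> {}"
  then obtain a where "a \<in> S" by auto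
  hence "replicate n a \<in> words S n" unfolding words_def by auto
  hence "cls J ` words S n \<noteq> {}" by auto
  moreover have "finite (cls J ` words S n)" using finite_words[OF fin] by simp
  ultimately have "card (cls J ` words S n) \<ge> 1" by (simp add: Suc_le_eq card_gt_0_iff)
  thus ?thesis unfolding growth_alt by simp
qed

lemma char_root_pos: assumes "finite S" shows "char_root S J > 0"
proof -
  define q where "q = real (card S) + 1"
  have q: "q > 0" "q \<ge> 1" unfolding q_def by auto
  have "summable (\<lambda>n. growth S J n * (1 / q) ^ n)"
  proof (rule summable_comparison_test')
    show "summable (\<lambda>n. (real (card S) / q) ^ n)"
      by (rule summable_geometric) (use q in \<open>auto simp: q_def\<close>)
    fix n
    have "norm (growth S J n * (1 / q) ^ n) = growth S J n * (1 / q) ^ n"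
      using growth_nonneg[of S J n] q by simp
    also have "\<dots> \<le> real (card S) ^ n * (1 / q) ^ n"
      using growth_le[OF assms] q by (intro mult_right_mono) auto
    also have "\<dots> = (real (card S) / q) ^ n" by (simp add: power_divide)
    finally show "norm (growth S J n * (1 / q) ^ n) \<le> (real (card S) / q) ^ n" .
  qed
  hence "conv_radius (growth S J) \<ge> norm (1 / q)" by (rule conv_radius_geI)
  moreover have "norm (1/q) > 0" using q by simp
  ultimately have "ereal 0 < conv_radius (growth S J)"
    using order_less_le_trans[of "ereal 0" "ereal (norm (1/q))"] by simp
  thus ?thesis unfolding char_root_def by (simp add: zero_ereal_def)
qed

lemma char_root_le1: assumes "finite S" "S \<noteq> {}" shows "char_root S J \<le> 1"
proof -
  have "\<not> summable (\<lambda>n. norm (growth S J n * (1::real) ^ n))"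
  proof
    assume "summable (\<lambda>n. norm (growth S J n * (1::real) ^ n))"
    hence "(\<lambda>n. norm (growth S J n * (1::real) ^ n)) \<longlonglongrightarrow> 0" by (rule summable_LIMSEQ_zero)
    moreover have "\<forall>n. norm (growth S J n * (1::real) ^ n) \<ge> 1"
    proof
      fix n have "1 \<le> growth S J n" by (rule growth_ge1[OF assms])
      thus "norm (growth S J n * (1::real) ^ n) \<ge> 1" by simp
    qed
    ultimately show False
      by (metis (no_types, lifting) LIMSEQ_le_const le_numeral_extra(2))
  qed
  hence "conv_radius (growth S J) \<le> norm (1::real)" by (rule conv_radius_leI)
  thus ?thesis unfolding char_root_def by (simp add: one_ereal_def)
qed

lemma conv_radius_mono_le:
  assumes "\<And>n. 0 \<le> f n" "\<And>n. f n \<le> (g n :: real)"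
  shows "conv_radius g \<le> conv_radius f"
proof (rule conv_radius_geI_ex)
  fix r :: real assume r: "0 < r" "ereal r < conv_radius g"
  have sg: "summable (\<lambda>n. norm (g n) * norm r ^ n)"
    using abs_summable_in_conv_radius[of r g] r by (simp add: abs_mult power_abs)
  have "summable (\<lambda>n. f n * r ^ n)"
  proof (rule summable_comparison_test'[OF sg])
    fix n show "norm (f n * r ^ n) \<le> norm (g n) * norm r ^ n"
      using assms[of n] r by (simp add: abs_mult power_abs mult_right_mono)
  qed
  thus "\<exists>z. norm z = r \<and> summable (\<lambda>n. f n * z ^ n)" using r by (intro exI[of _ r]) auto
qed


lemma mobius_rec_growth:
  assumes sym: "sym J" and irr: "\<forall>a. (a, a) \<notin> J" and fin: "finite S"
  shows "(\<Sum>C\<in>cliques S J. (-1) ^ card C *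
            (if card C \<le> n then growth S J (n - card C) else 0)) = (if n = 0 then 1 else 0)"
  using mobius_rec[OF sym irr fin, of n] unfolding growth_alt by simp

lemma mob_sums:
  fixes z :: "'b::{real_normed_field,banach}" and S :: "'a set"
  assumes sym: "sym J" and irr: "\<forall>a. (a, a) \<notin> J" and fin: "finite S"
    and zr: "ereal (norm z) < char_root S J"
  shows "summable (\<lambda>n. of_real (growth S J n) * z ^ n)"
    and "mobg S J z * (\<Sum>n. of_real (growth S J n) * z ^ n) = 1"
proof -
  define a where "a n = of_real (growth S J n) * z ^ n" for n
  have "summable (\<lambda>n. norm (of_real (growth S J n) * z ^ n :: 'b))"
    using abs_summable_in_conv_radius[of z "\<lambda>n. of_real (growth S J n) :: 'b"] zr
    unfolding char_root_def conv_radius_of_real by simp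
  hence "summable (\<lambda>n. norm (a n))" unfolding a_def .
  hence sa: "summable a" by (rule summable_norm_cancel)
  thus "summable (\<lambda>n. of_real (growth S J n) * z ^ n)" unfolding a_def .
  define G where "G = suminf a"
  have aG: "a sums G" using sa unfolding G_def by (simp add: summable_sums)
  define b where "b C n = (if card C \<le> n then ((-1) ^ card C * z ^ card C) * a (n - card C) else 0)"
    for C :: "'a set" and n
  have bs: "b C sums (((-1) ^ card C * z ^ card C) * G)" for C
  proof -
    have "(\<lambda>n. b C (n + card C)) = (\<lambda>n. ((-1) ^ card C * z ^ card C) * a n)"
      unfolding b_def by auto
    hence "(\<lambda>n. b C (n + card C)) sums (((-1) ^ card C * z ^ card C) * G)"
      using sums_mult[OF aG] by simp
    moreover have "(\<Sum>i<card C. b C i) = 0" unfolding b_def by simp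
    ultimately show ?thesis using sums_iff_shift[of "b C" "card C"] by simp
  qed
  have "(\<lambda>n. \<Sum>C\<in>cliques S J. b C n) sums (\<Sum>C\<in>cliques S J. ((-1) ^ card C * z ^ card C) * G)"
    by (rule sums_sum) (rule bs)
  moreover have "(\<Sum>C\<in>cliques S J. ((-1) ^ card C * z ^ card C) * G) = mobg S J z * G"
    unfolding mobg_def by (simp add: sum_distrib_right)
  moreover have "(\<lambda>n. \<Sum>C\<in>cliques S J. b C n) = (\<lambda>n. if n = 0 then 1 else 0)"
  proof
    fix n
    have "b C n = of_real ((-1) ^ card C * (if card C \<le> n then growth S J (n - card C) else 0)) * z ^ n"
      for C
    proof (cases "card C \<le> n")
      case True
      hence "z ^ card C * z ^ (n - card C) = z ^ n" by (simp add: power_add[symmetric])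
      then show ?thesis using True unfolding b_def a_def by (simp add: algebra_simps)
    qed (simp add: b_def)
    hence "(\<Sum>C\<in>cliques S J. b C n) = of_real (\<Sum>C\<in>cliques S J. (-1) ^ card C *
            (if card C \<le> n then growth S J (n - card C) else 0)) * z ^ n"
      by (simp add: sum_distrib_right)
    also have "\<dots> = (if n = 0 then 1 else 0)" by (simp add: mobius_rec_growth[OF sym irr fin])
    finally show "(\<Sum>C\<in>cliques S J. b C n) = (if n = 0 then 1 else 0)" .
  qed
  ultimately have "(\<lambda>n. if n = 0 then (1::'b) else 0) sums (mobg S J z * G)" by simp
  moreover have "(\<lambda>n. if n = 0 then (1::'b) else 0) sums 1" using sums_single[of 0 "\<lambda>_. 1::'b"] by simp
  ultimately show "mobg S J z * (\<Sum>n. of_real (growth S J n) * z ^ n) = 1"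
    unfolding G_def a_def using sums_unique2 by blast
qed

lemma mob_pos:
  assumes sym: "sym J" and irr: "\<forall>a. (a, a) \<notin> J" and fin: "finite S"
    and x: "0 \<le> x" "ereal x < char_root S J"
  shows "mobius S J x > 0"
proof -
  have xr: "ereal (norm x) < char_root S J" using x by simp
  have s: "summable (\<lambda>n. growth S J n * x ^ n)" using mob_sums(1)[OF sym irr fin xr] by simp
  have e: "mobius S J x * (\<Sum>n. growth S J n * x ^ n) = 1"
    using mob_sums(2)[OF sym irr fin xr] by (simp add: mobg_real)
  have "(\<Sum>n. growth S J n * x ^ n) \<ge> 0"
    by (rule suminf_nonneg[OF s]) (simp add: growth_nonneg x)
  with e show ?thesis by (metis less_eq_real_def mult_nonpos_nonneg zero_less_one leD not_le)
qed


lemma mob_root: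
  assumes sym: "sym J" and irr: "\<forall>a. (a, a) \<notin> J" and fin: "finite S" and ne: "S \<noteq> {}"
  shows "mobius S J (real_of_ereal (char_root S J)) = 0"
proof -
  have p: "char_root S J > 0" using char_root_pos[OF fin] .
  have l: "char_root S J \<le> 1" using char_root_le1[OF fin ne] .
  obtain r where r: "char_root S J = ereal r" using p l
    by (cases "char_root S J") auto
  have r0: "r > 0" using p r by simp
  define \<mu> where "\<mu> = mobius S J"
  define \<mu>c where "\<mu>c = (mobg S J :: complex \<Rightarrow> complex)"
  have finC: "finite (cliques S J)" unfolding cliques_def using fin by simp
  have cont: "continuous_on A \<mu>" for A unfolding \<mu>_def mobius_def
    by (intro continuous_intros)
  have contc: "continuous_on A \<mu>c" for A unfolding \<mu>c_def mobg_def
    by (intro continuous_intros)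
  have holc: "\<mu>c holomorphic_on A" for A unfolding \<mu>c_def mobg_def
    by (intro holomorphic_intros)
  have pos: "\<mu> x > 0" if "0 \<le> x" "x < r" for x
    unfolding \<mu>_def using mob_pos[OF sym irr fin] that r by simp
  show ?thesis
  proof (rule ccontr)
    assume nz: "mobius S J (real_of_ereal (char_root S J)) \<noteq> 0"
    hence nzr: "\<mu> r \<noteq> 0" using r unfolding \<mu>_def by simp
    have "\<mu> r > 0"
    proof (rule ccontr)
      assume "\<not> \<mu> r > 0"
      hence "\<mu> r \<le> 0" by simp
      moreover have "0 \<le> \<mu> 0" using pos[of 0] r0 by simp
      ultimately obtain x where x: "0 \<le> x" "x \<le> r" "\<mu> x = 0"
        using IVT2'[of \<mu> r 0 0] cont r0 by auto
      show False using x pos[of x] nzr by (cases "x = r") auto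
    qed
    hence posr: "\<mu> x > 0" if "x \<in> {0..r}" for x using pos that by (cases "x = r") auto
    obtain x0 where x0: "x0 \<in> {0..r}" "\<forall>y\<in>{0..r}. \<mu> x0 \<le> \<mu> y"
      using continuous_attains_inf[of "{0..r}" \<mu>] cont r0 by auto
    define m where "m = \<mu> x0"
    have m0: "m > 0" unfolding m_def using posr x0 by simp
    have mle: "m \<le> \<mu> y" if "0 \<le> y" "y \<le> r" for y unfolding m_def using x0 that by simp
    have B1: "m \<le> norm (\<mu>c z)" if z: "norm z < r" for z
    proof -
      have zr: "ereal (norm z) < char_root S J" using z r by simp
      have nzr: "ereal (norm (norm z)) < char_root S J" using z r by simp
      define Gc where "Gc = (\<Sum>n. complex_of_real (growth S J n) * z ^ n)"
      define Gr where "Gr = (\<Sum>n. growth S J n * norm z ^ n)"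
      have e1: "\<mu>c z * Gc = 1" unfolding \<mu>c_def Gc_def using mob_sums(2)[OF sym irr fin zr] .
      have e2: "\<mu> (norm z) * Gr = 1" unfolding \<mu>_def Gr_def
        using mob_sums(2)[OF sym irr fin nzr] by (simp add: mobg_real)
      have sr: "summable (\<lambda>n. growth S J n * norm z ^ n)"
        using mob_sums(1)[OF sym irr fin nzr] by simp
      have "norm Gc \<le> (\<Sum>n. norm (complex_of_real (growth S J n) * z ^ n))"
        unfolding Gc_def
        by (rule summable_norm) (use sr in \<open>simp add: norm_mult norm_power abs_of_nonneg[OF growth_nonneg]\<close>)
      also have "\<dots> = Gr" unfolding Gr_def
        by (simp add: norm_mult norm_power abs_of_nonneg[OF growth_nonneg])
      finally have nG: "norm Gc \<le> Gr" .
      have mu: "m \<le> \<mu> (norm z)" using mle z by simp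
      have mupos: "\<mu> (norm z) > 0" using mu m0 by linarith
      have Gr_eq: "Gr = 1 / \<mu> (norm z)" using e2 mupos by (simp add: eq_divide_eq mult.commute)
      have "1 / \<mu> (norm z) \<le> 1 / m" using mu m0 mupos by (simp add: divide_simps)
      hence Gr_le: "Gr \<le> 1 / m" using Gr_eq by simp
      have Gne: "Gc \<noteq> 0" using e1 by auto
      hence nGpos: "norm Gc > 0" by simp
      have nm: "norm (\<mu>c z) * norm Gc = 1" using e1 by (metis norm_mult norm_one)
      have "norm Gc \<le> 1 / m" using nG Gr_le by linarith
      hence "m * norm Gc \<le> 1" using m0 by (simp add: le_divide_eq mult.commute)
      hence "m * norm Gc \<le> norm (\<mu>c z) * norm Gc" using nm by simp
      thus ?thesis using nGpos by simp
    qed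
    have B2: "m \<le> norm (\<mu>c z)" if z: "norm z \<le> r" for z
    proof -
      have "closure (ball (0::complex) r) \<subseteq> {z. m \<le> norm (\<mu>c z)}"
      proof (rule closure_minimal)
        show "ball 0 r \<subseteq> {z. m \<le> norm (\<mu>c z)}" using B1 by auto
        show "closed {z. m \<le> norm (\<mu>c z)}"
          by (intro closed_Collect_le continuous_intros) (use contc in \<open>auto\<close>)
      qed
      moreover have "z \<in> closure (ball 0 r)" using z r0 by simp
      ultimately show ?thesis by auto
    qed
    have "uniformly_continuous_on (cball 0 (r + 1)) \<mu>c"
      by (rule compact_uniformly_continuous[OF contc]) simp
    then obtain d where d: "d > 0" and
      dd: "\<forall>x\<in>cball 0 (r+1). \<forall>x'\<in>cball 0 (r+1). dist x' x < d \<longrightarrow> dist (\<mu>c x') (\<mu>c x) < m / 2"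
      unfolding uniformly_continuous_on_def using m0 by (meson half_gt_zero)
    define e where "e = min d 1"
    have e0: "e > 0" unfolding e_def using d by simp
    have B4: "\<mu>c w \<noteq> 0" if w: "norm w < r + e" for w
    proof (cases "norm w \<le> r")
      case True then show ?thesis using B2 m0 by fastforce
    next
      case False
      define x where "x = (r / norm w) *\<^sub>R w"
      have nw: "norm w > 0" using False r0 by auto
      have nx: "norm x = r" unfolding x_def using nw r0 by simp
      have "w - x = (1 - r / norm w) *\<^sub>R w" unfolding x_def by (simp add: algebra_simps)
      hence "norm (w - x) = (1 - r / norm w) * norm w" using False nw by simp
      also have "\<dots> = norm w - r" using nw by (simp add: field_simps)
      finally have dwx: "dist w x < d" using w False unfolding e_def dist_norm by simp
      have "w \<in> cball 0 (r+1)" "x \<in> cball 0 (r+1)" using w nx unfolding e_def by auto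
      hence "dist (\<mu>c w) (\<mu>c x) < m / 2" using dd dwx by blast
      moreover have "m \<le> norm (\<mu>c x)" using B2 nx by simp
      moreover have "dist (\<mu>c x) 0 \<le> dist (\<mu>c x) (\<mu>c w) + dist (\<mu>c w) 0" by (rule dist_triangle)
      hence "norm (\<mu>c x) \<le> dist (\<mu>c w) (\<mu>c x) + norm (\<mu>c w)" by (simp add: dist_commute)
      ultimately have "norm (\<mu>c w) > 0" using m0 by linarith
      thus ?thesis by simp
    qed
    define f where "f z = inverse (\<mu>c z)" for z
    have holf: "f holomorphic_on ball 0 (r + e)" unfolding f_def
      by (rule holomorphic_on_inverse[OF holc]) (use B4 in auto)
    define F where "F = Abs_fps (\<lambda>n. complex_of_real (growth S J n))"
    have cF: "fps_conv_radius F = ereal r"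
      unfolding F_def fps_conv_radius_def using conv_radius_of_real[where 'b=complex, of "growth S J"] r unfolding char_root_def by simp
    have "f has_fps_expansion F" unfolding has_fps_expansion_def
    proof
      show "0 < fps_conv_radius F" using cF r0 by simp
      have "eventually (\<lambda>z. z \<in> ball 0 r) (nhds (0::complex))"
        using r0 by (intro eventually_nhds_in_open) auto
      thus "\<forall>\<^sub>F z in nhds 0. eval_fps F z = f z"
      proof eventually_elim
        case (elim z)
        hence zr: "ereal (norm z) < char_root S J" using r by simp
        have "\<mu>c z * eval_fps F z = 1" unfolding \<mu>c_def F_def eval_fps_def
          using mob_sums(2)[OF sym irr fin zr] by simp
        thus ?case unfolding f_def by (metis inverse_unique)
      qed
    qed
    hence "F = fps_expansion f 0"
      by (intro fps_ext) (simp add: fps_nth_fps_expansion fps_expansion_def)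
    moreover have "fps_conv_radius (fps_expansion f 0) \<ge> ereal (r + e)"
      by (rule conv_radius_fps_expansion) (use holf in simp)
    ultimately show False using cF e0 by simp
  qed
qed


lemma restr_sym: "sym I \<Longrightarrow> sym (restr S I)"
  unfolding restr_def sym_def by blast

lemma restr_irr: "\<forall>a. (a, a) \<notin> I \<Longrightarrow> \<forall>a. (a, a) \<notin> restr S I"
  unfolding restr_def by blast

lemma cliques_restr: "cliques S (restr S I) = cliques S I"
  unfolding cliques_def restr_def by blast

lemma mobius_restr: "mobius S (restr S I) x = mobius S I x"
  unfolding mobius_def cliques_restr ..

lemma pf_out: "a \<notin> set x \<Longrightarrow> pf a b x = pf b b x"
  unfolding pf_def by (rule filter_cong) auto

lemma peq_restr_mono:
  assumes irr: "\<forall>a. (a, a) \<notin> I" and sub: "S' \<subseteq> S"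
    and x: "set x \<subseteq> S'" and y: "set y \<subseteq> S'" and p: "peq (restr S I) x y"
  shows "peq (restr S' I) x y"
  unfolding peq_def
proof (intro allI impI)
  fix a b assume ab: "(a, b) \<notin> restr S' I"
  have bb: "pf c c x = pf c c y" for c
  proof -
    have "(c, c) \<notin> restr S I" using irr unfolding restr_def by blast
    thus ?thesis using p unfolding peq_def by blast
  qed
  show "pf a b x = pf a b y"
  proof (cases "a \<in> S'")
    case aS: True
    show ?thesis
    proof (cases "b \<in> S'")
      case True
      hence "(a, b) \<notin> restr S I" using ab aS sub unfolding restr_def by auto
      thus ?thesis using p unfolding peq_def by blast
    next
      case False
      hence "b \<notin> set x" "b \<notin> set y" using x y by auto
      hence "pf b a x = pf a a x" "pf b a y = pf a a y" by (simp_all add: pf_out)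
      thus ?thesis using bb[of a] pf_sym[of a b] by simp
    qed
  next
    case False
    hence "a \<notin> set x" "a \<notin> set y" using x y by auto
    hence "pf a b x = pf b b x" "pf a b y = pf b b y" by (simp_all add: pf_out)
    thus ?thesis using bb[of b] by simp
  qed
qed

lemma growth_mono:
  assumes sym: "sym I" and irr: "\<forall>a. (a, a) \<notin> I" and fin: "finite S" and sub: "S' \<subseteq> S"
  shows "growth S' (restr S' I) n \<le> growth S (restr S I) n"
proof -
  define J where "J = restr S I"
  define J' where "J' = restr S' I"
  have sJ: "sym J" "\<forall>a. (a, a) \<notin> J" unfolding J_def using restr_sym[OF sym] restr_irr[OF irr] by auto
  have sJ': "sym J'" "\<forall>a. (a, a) \<notin> J'" unfolding J'_def using restr_sym[OF sym] restr_irr[OF irr] by auto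
  define W' where "W' = words S' n"
  define W where "W = words S n"
  have WW: "W' \<subseteq> W" unfolding W'_def W_def words_def using sub by auto
  have finW: "finite W" unfolding W_def by (rule finite_words[OF fin])
  define h where "h X = cls J' (SOME w. w \<in> W' \<and> cls J w = X)" for X
  have key: "cls J' x = cls J' y" if "x \<in> W'" "y \<in> W'" "cls J x = cls J y" for x y
  proof -
    have "peq J x y" using that(3) cls_eq[OF sJ] by blast
    have xs: "set x \<subseteq> S'" "set y \<subseteq> S'" using that(1,2) unfolding W'_def words_def by auto
    have "peq J' x y" unfolding J'_def
      by (rule peq_restr_mono[OF irr sub xs \<open>peq J x y\<close>[unfolded J_def]])
    thus ?thesis using cls_eq[OF sJ'] by blast
  qed
  have "cls J' ` W' = h ` (cls J ` W')"
  proof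
    show "cls J' ` W' \<subseteq> h ` cls J ` W'"
    proof
      fix X assume "X \<in> cls J' ` W'"
      then obtain x where x: "x \<in> W'" "X = cls J' x" by auto
      have ex: "\<exists>w. w \<in> W' \<and> cls J w = cls J x" using x by blast
      define w where "w = (SOME w. w \<in> W' \<and> cls J w = cls J x)"
      have w: "w \<in> W' \<and> cls J w = cls J x" unfolding w_def by (rule someI_ex[OF ex])
      have "h (cls J x) = cls J' w" unfolding h_def w_def ..
      also have "\<dots> = X" using key[of w x] w x by simp
      finally show "X \<in> h ` cls J ` W'" using x by (metis imageI)
    qed
  next
    show "h ` cls J ` W' \<subseteq> cls J' ` W'"
    proof
      fix X assume "X \<in> h ` cls J ` W'"
      then obtain x where x: "x \<in> W'" "X = h (cls J x)" by auto
      have ex: "\<exists>w. w \<in> W' \<and> cls J w = cls J x" using x by blast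
      define w where "w = (SOME w. w \<in> W' \<and> cls J w = cls J x)"
      have w: "w \<in> W' \<and> cls J w = cls J x" unfolding w_def by (rule someI_ex[OF ex])
      have "X = cls J' w" unfolding x h_def w_def ..
      thus "X \<in> cls J' ` W'" using w by simp
    qed
  qed
  hence "card (cls J' ` W') = card (h ` (cls J ` W'))" by simp
  also have "\<dots> \<le> card (cls J ` W')" by (rule card_image_le) (use finite_subset[OF WW finW] in simp)
  also have "\<dots> \<le> card (cls J ` W)" by (rule card_mono) (use finW WW in auto)
  finally have "real (card (cls J' ` W')) \<le> real (card (cls J ` W))" by (rule of_nat_mono)
  thus ?thesis unfolding growth_alt J_def J'_def W_def W'_def .
qed

lemma char_root_mono:
  assumes sym: "sym I" and irr: "\<forall>a. (a, a) \<notin> I" and fin: "finite S" and sub: "S' \<subseteq> S"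
  shows "char_root S (restr S I) \<le> char_root S' (restr S' I)"
  unfolding char_root_def
  by (rule conv_radius_mono_le) (use growth_nonneg growth_mono[OF assms] in auto)

lemma mobius_empty: "mobius {} I x = 1"
proof -
  have "cliques {} I = {{}}" unfolding cliques_def by auto
  thus ?thesis unfolding mobius_def by simp
qed

lemma mobius_delete:
  assumes sym: "sym I" and irr: "\<forall>a. (a, a) \<notin> I" and fin: "finite U" and a: "a \<in> U"
  shows "mobius U I x = mobius (U - {a}) I x - x * mobius {c \<in> U. (a, c) \<in> I} I x"
proof -
  define N where "N = {c \<in> U. (a, c) \<in> I}"
  have aN: "a \<notin> N" unfolding N_def using irr by auto
  have finN: "finite N" unfolding N_def using fin by simp
  have eq: "cliques U I = cliques (U - {a}) I \<union> insert a ` cliques N I"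
  proof
    show "cliques U I \<subseteq> cliques (U - {a}) I \<union> insert a ` cliques N I"
    proof
      fix C assume C: "C \<in> cliques U I"
      show "C \<in> cliques (U - {a}) I \<union> insert a ` cliques N I"
      proof (cases "a \<in> C")
        case False
        then have "C \<in> cliques (U - {a}) I" using C unfolding cliques_def by auto
        then show ?thesis by simp
      next
        case True
        have "C - {a} \<in> cliques N I" using C True unfolding cliques_def N_def by auto
        moreover have "C = insert a (C - {a})" using True by auto
        ultimately show ?thesis by blast
      qed
    qed
  next
    show "cliques (U - {a}) I \<union> insert a ` cliques N I \<subseteq> cliques U I"
    proof
      fix C assume "C \<in> cliques (U - {a}) I \<union> insert a ` cliques N I"
      then consider "C \<in> cliques (U - {a}) I" | D where "D \<in> cliques N I" "C = insert a D" by blast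
      then show "C \<in> cliques U I"
      proof cases
        case 1 then show ?thesis unfolding cliques_def by auto
      next
        case 2
        have "\<forall>c\<in>D. (a, c) \<in> I \<and> (c, a) \<in> I" using 2(1) sym unfolding cliques_def N_def
          by (auto dest: symD)
        then show ?thesis using 2 a unfolding cliques_def N_def by auto
      qed
    qed
  qed
  have disj: "cliques (U - {a}) I \<inter> insert a ` cliques N I = {}" unfolding cliques_def by auto
  have inj: "inj_on (insert a) (cliques N I)"
  proof (rule inj_onI)
    fix C D assume CD: "C \<in> cliques N I" "D \<in> cliques N I" "insert a C = insert a D"
    then have "a \<notin> C" "a \<notin> D" using aN unfolding cliques_def by auto
    thus "C = D" using CD(3) by (metis Diff_insert_absorb)
  qed
  have finC1: "finite (cliques (U - {a}) I)" unfolding cliques_def using fin by simp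
  have finC2: "finite (cliques N I)" unfolding cliques_def using finN by simp
  have "mobius U I x = mobius (U - {a}) I x +
      (\<Sum>C\<in>cliques N I. (-1) ^ card (insert a C) * x ^ card (insert a C))"
    unfolding mobius_def eq using finC1 finC2 disj inj
    by (simp add: sum.union_disjoint sum.reindex)
  also have "(\<Sum>C\<in>cliques N I. (-1) ^ card (insert a C) * x ^ card (insert a C))
      = - x * mobius N I x"
    unfolding mobius_def sum_distrib_left
  proof (rule sum.cong[OF refl])
    fix C assume "C \<in> cliques N I"
    hence "finite C" "a \<notin> C" using finN aN finite_subset unfolding cliques_def by auto
    thus "(-1) ^ card (insert a C) * x ^ card (insert a C) = - x * ((-1) ^ card C * x ^ card C)"
      by simp
  qed
  finally show ?thesis unfolding N_def by simp
qed

lemma mobius_product: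
  assumes sym: "sym I" and finA: "finite A" and finB: "finite B" and disj: "A \<inter> B = {}"
    and cross: "\<forall>x\<in>A. \<forall>y\<in>B. (x, y) \<in> I"
  shows "mobius (A \<union> B) I z = mobius A I z * mobius B I z"
proof -
  have cross2: "(y, x) \<in> I" if "x \<in> A" "y \<in> B" for x y
    using cross that sym by (auto dest: symD)
  define g where "g p = fst p \<union> snd p" for p :: "'a set \<times> 'a set"
  have eq: "cliques (A \<union> B) I = g ` (cliques A I \<times> cliques B I)"
  proof
    show "cliques (A \<union> B) I \<subseteq> g ` (cliques A I \<times> cliques B I)"
    proof
      fix C assume C: "C \<in> cliques (A \<union> B) I"
      have CAB: "C \<subseteq> A \<union> B" using C unfolding cliques_def by simp
      have Cp: "\<forall>x\<in>C. \<forall>y\<in>C. x \<noteq> y \<longrightarrow> (x, y) \<in> I" using C unfolding cliques_def by simp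
      have "C \<inter> A \<in> cliques A I" unfolding cliques_def mem_Collect_eq
        by (intro conjI) (blast, use Cp in blast)
      moreover have "C \<inter> B \<in> cliques B I" unfolding cliques_def mem_Collect_eq
        by (intro conjI) (blast, use Cp in blast)
      moreover have "C = g (C \<inter> A, C \<inter> B)" using CAB unfolding g_def by auto
      ultimately show "C \<in> g ` (cliques A I \<times> cliques B I)"
        by (intro image_eqI[of C g "(C \<inter> A, C \<inter> B)"]) simp_all
    qed
  next
    show "g ` (cliques A I \<times> cliques B I) \<subseteq> cliques (A \<union> B) I"
    proof
      fix C assume "C \<in> g ` (cliques A I \<times> cliques B I)"
      then obtain p where p: "p \<in> cliques A I \<times> cliques B I" "C = g p" by (rule imageE)
      define C1 where "C1 = fst p"
      define C2 where "C2 = snd p"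
      have cc: "C1 \<in> cliques A I" "C2 \<in> cliques B I" using p(1) unfolding C1_def C2_def
        by (simp_all add: mem_Times_iff)
      have CC: "C = C1 \<union> C2" using p(2) unfolding g_def C1_def C2_def by simp
      have c1: "C1 \<subseteq> A" "\<forall>x\<in>C1. \<forall>y\<in>C1. x \<noteq> y \<longrightarrow> (x, y) \<in> I"
        using cc(1) unfolding cliques_def by simp_all
      have c2: "C2 \<subseteq> B" "\<forall>x\<in>C2. \<forall>y\<in>C2. x \<noteq> y \<longrightarrow> (x, y) \<in> I"
        using cc(2) unfolding cliques_def by simp_all
      have sub: "C \<subseteq> A \<union> B" using c1(1) c2(1) CC by blast
      have pw: "\<forall>x\<in>C. \<forall>y\<in>C. x \<noteq> y \<longrightarrow> (x, y) \<in> I"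
      proof (intro ballI impI)
        fix x y assume xy: "x \<in> C" "y \<in> C" "x \<noteq> y"
        show "(x, y) \<in> I"
        proof (cases "x \<in> C1")
          case xC1: True
          show ?thesis
          proof (cases "y \<in> C1")
            case True then show ?thesis using xC1 c1(2) xy(3) by blast
          next
            case False then have "y \<in> C2" using xy(2) CC by simp
            then have "y \<in> B" "x \<in> A" using xC1 c1(1) c2(1) by blast+
            then show ?thesis using cross by blast
          qed
        next
          case False
          then have xC2: "x \<in> C2" using xy(1) CC by simp
          show ?thesis
          proof (cases "y \<in> C1")
            case True
            then have "y \<in> A" "x \<in> B" using xC2 c1(1) c2(1) by blast+
            then show ?thesis using cross2 by blast
          next
            case False then have "y \<in> C2" using xy(2) CC by simp
            then show ?thesis using xC2 c2(2) xy(3) by blast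
          qed
        qed
      qed
      show "C \<in> cliques (A \<union> B) I" unfolding cliques_def using sub pw by simp
    qed
  qed
  have inj: "inj_on g (cliques A I \<times> cliques B I)"
  proof (rule inj_onI)
    fix p q assume p: "p \<in> cliques A I \<times> cliques B I" and q: "q \<in> cliques A I \<times> cliques B I"
      and e: "g p = g q"
    have s: "fst p \<subseteq> A" "snd p \<subseteq> B" "fst q \<subseteq> A" "snd q \<subseteq> B"
      using p q unfolding cliques_def by auto
    have "fst p = g p \<inter> A" "snd p = g p \<inter> B" "fst q = g q \<inter> A" "snd q = g q \<inter> B"
      using s disj unfolding g_def by blast+
    thus "p = q" using e by (simp add: prod_eq_iff)
  qed
  have finCA: "finite (cliques A I)" unfolding cliques_def using finA by simp
  have finCB: "finite (cliques B I)" unfolding cliques_def using finB by simp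
  have "mobius (A \<union> B) I z = (\<Sum>p\<in>cliques A I \<times> cliques B I. (-1) ^ card (g p) * z ^ card (g p))"
    unfolding mobius_def eq by (rule sum.reindex[OF inj, unfolded comp_def])
  also have "\<dots> = (\<Sum>p\<in>cliques A I \<times> cliques B I.
      ((-1) ^ card (fst p) * z ^ card (fst p)) * ((-1) ^ card (snd p) * z ^ card (snd p)))"
  proof (rule sum.cong[OF refl])
    fix p assume p: "p \<in> cliques A I \<times> cliques B I"
    have s: "fst p \<subseteq> A" "snd p \<subseteq> B" using p unfolding cliques_def by auto
    have "finite (fst p)" "finite (snd p)" "fst p \<inter> snd p = {}"
      using finite_subset[OF s(1) finA] finite_subset[OF s(2) finB] s disj by blast+
    hence "card (g p) = card (fst p) + card (snd p)" unfolding g_def by (rule card_Un_disjoint)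
    thus "(-1) ^ card (g p) * z ^ card (g p) =
      ((-1) ^ card (fst p) * z ^ card (fst p)) * ((-1) ^ card (snd p) * z ^ card (snd p))"
      by (simp add: power_add mult_ac)
  qed
  also have "\<dots> = (\<Sum>C1\<in>cliques A I. \<Sum>C2\<in>cliques B I.
      ((-1) ^ card C1 * z ^ card C1) * ((-1) ^ card C2 * z ^ card C2))"
    by (subst sum.cartesian_product) (simp add: case_prod_unfold)
  also have "\<dots> = mobius A I z * mobius B I z"
    unfolding mobius_def by (rule sum_product[symmetric])
  finally show ?thesis .
qed

lemma rtrancl_cross:
  assumes "(s, t) \<in> R\<^sup>*" "s \<in> S" "t \<notin> S"
  shows "\<exists>x y. x \<in> S \<and> y \<notin> S \<and> (x, y) \<in> R"
  using assms
proof (induction rule: rtrancl_induct)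
  case base then show ?case by simp
next
  case (step y z)
  show ?case
  proof (cases "y \<in> S")
    case True then show ?thesis using step by blast
  next
    case False then show ?thesis using step by blast
  qed
qed

lemma growth_empty_pos: "n > 0 \<Longrightarrow> growth {} J n = 0"
proof -
  assume "n > 0"
  hence w: "words {} n = {}" unfolding words_def by auto
  show ?thesis unfolding growth_alt w by simp
qed

lemma char_root_empty: "char_root {} J = \<infinity>"
proof -
  have "conv_radius (growth {} J) = conv_radius (\<lambda>_. 0 :: real)"
    by (rule conv_radius_cong', rule eventually_sequentiallyI[of 1]) (simp add: growth_empty_pos)
  thus ?thesis unfolding char_root_def by simp
qed


lemma base_facts:
  assumes sym: "sym I" and irr: "\<forall>a. (a, a) \<notin> I" and fin: "finite Sg" and ne: "Sg \<noteq> {}"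
  shows "char_root Sg (restr Sg I) = ereal (real_of_ereal (char_root Sg (restr Sg I)))"
    and "real_of_ereal (char_root Sg (restr Sg I)) > 0"
proof -
  have p: "char_root Sg (restr Sg I) > 0" by (rule char_root_pos[OF fin])
  have l: "char_root Sg (restr Sg I) \<le> 1" by (rule char_root_le1[OF fin ne])
  obtain r where r: "char_root Sg (restr Sg I) = ereal r" using p l
    by (cases "char_root Sg (restr Sg I)") auto
  show "char_root Sg (restr Sg I) = ereal (real_of_ereal (char_root Sg (restr Sg I)))" using r by simp
  show "real_of_ereal (char_root Sg (restr Sg I)) > 0" using r p by simp
qed

lemma root_fact:
  assumes sym: "sym I" and irr: "\<forall>a. (a, a) \<notin> I" and fin: "finite S" and ne: "S \<noteq> {}"
  shows "mobius S I (real_of_ereal (char_root S (restr S I))) = 0"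
  using mob_root[OF restr_sym[OF sym, of S] restr_irr[OF irr, of S] fin ne] by (simp add: mobius_restr)

lemma part1_iff:
  assumes sym: "sym I" and irr: "\<forall>a. (a, a) \<notin> I" and fin: "finite Sg" and ne: "Sg \<noteq> {}"
    and sub: "S' \<subseteq> Sg"
  shows "char_root Sg (restr Sg I) < char_root S' (restr S' I) \<longleftrightarrow>
           mobius S' I (real_of_ereal (char_root Sg (restr Sg I))) > 0"
proof -
  define r where "r = real_of_ereal (char_root Sg (restr Sg I))"
  have rr: "char_root Sg (restr Sg I) = ereal r" unfolding r_def by (rule base_facts(1)[OF assms(1-4)])
  have r0: "r > 0" unfolding r_def by (rule base_facts(2)[OF assms(1-4)])
  have finS': "finite S'" using finite_subset[OF sub fin] .
  have le: "char_root Sg (restr Sg I) \<le> char_root S' (restr S' I)"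
    by (rule char_root_mono[OF sym irr fin sub])
  show ?thesis unfolding r_def[symmetric]
  proof
    assume "char_root Sg (restr Sg I) < char_root S' (restr S' I)"
    hence "ereal r < char_root S' (restr S' I)" using rr by simp
    hence "mobius S' (restr S' I) r > 0"
      using mob_pos[OF restr_sym[OF sym] restr_irr[OF irr] finS'] r0 by simp
    thus "mobius S' I r > 0" by (simp add: mobius_restr)
  next
    assume m: "mobius S' I r > 0"
    show "char_root Sg (restr Sg I) < char_root S' (restr S' I)"
    proof (rule ccontr)
      assume "\<not> char_root Sg (restr Sg I) < char_root S' (restr S' I)"
      hence eq: "char_root S' (restr S' I) = ereal r" using le rr by simp
      show False
      proof (cases "S' = {}")
        case True
        then show False using eq char_root_empty[of "restr {} I"] by simp
      next
        case False
        have "mobius S' I (real_of_ereal (char_root S' (restr S' I))) = 0"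
          by (rule root_fact[OF sym irr finS' False])
        then show False using eq m by simp
      qed
    qed
  qed
qed

lemma nonneg_fact:
  assumes sym: "sym I" and irr: "\<forall>a. (a, a) \<notin> I" and fin: "finite Sg" and ne: "Sg \<noteq> {}"
    and sub: "S' \<subseteq> Sg"
  shows "mobius S' I (real_of_ereal (char_root Sg (restr Sg I))) \<ge> 0"
proof (cases "char_root Sg (restr Sg I) < char_root S' (restr S' I)")
  case True
  then show ?thesis using part1_iff[OF assms] by simp
next
  case False
  define r where "r = real_of_ereal (char_root Sg (restr Sg I))"
  have rr: "char_root Sg (restr Sg I) = ereal r" unfolding r_def by (rule base_facts(1)[OF assms(1-4)])
  have finS': "finite S'" using finite_subset[OF sub fin] .
  have le: "char_root Sg (restr Sg I) \<le> char_root S' (restr S' I)"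
    by (rule char_root_mono[OF sym irr fin sub])
  hence eq: "char_root S' (restr S' I) = ereal r" using False rr by simp
  show ?thesis
  proof (cases "S' = {}")
    case True then show ?thesis by (simp add: mobius_empty)
  next
    case ne': False
    have "mobius S' I (real_of_ereal (char_root S' (restr S' I))) = 0"
      by (rule root_fact[OF sym irr finS' ne'])
    then show ?thesis using eq unfolding r_def[symmetric] by simp
  qed
qed

lemma irr_pos:
  assumes sym: "sym I" and irr: "\<forall>a. (a, a) \<notin> I" and fin: "finite Sg" and ne: "Sg \<noteq> {}"
    and IS: "I \<subseteq> Sg \<times> Sg" and conn: "irreducible_tm Sg I"
  shows "S \<subset> Sg \<Longrightarrow> mobius S I (real_of_ereal (char_root Sg (restr Sg I))) > 0"
proof (induction "card S" arbitrary: S rule: less_induct)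
  case less
  define r where "r = real_of_ereal (char_root Sg (restr Sg I))"
  have r0: "r > 0" unfolding r_def by (rule base_facts(2)[OF assms(1-4)])
  have finS: "finite S" using finite_subset[of S Sg] less.prems fin by auto
  show ?case unfolding r_def[symmetric]
  proof (cases "S = {}")
    case True then show "mobius S I r > 0" by (simp add: mobius_empty)
  next
    case False
    then obtain s where s: "s \<in> S" by auto
    obtain t where t: "t \<in> Sg" "t \<notin> S" using less.prems by auto
    have sS: "s \<in> Sg" using s less.prems by auto
    have "(s, t) \<in> (Sg \<times> Sg - I)\<^sup>*" using conn sS t(1) unfolding irreducible_tm_def by blast
    from rtrancl_cross[OF this s t(2)] obtain b a where
      ba: "b \<in> S" "a \<notin> S" "(b, a) \<in> Sg \<times> Sg - I" by blast
    have aS: "a \<in> Sg" and bS: "b \<in> Sg" and baI: "(b, a) \<notin> I" using ba(3) by auto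
    have abI: "(a, b) \<notin> I" using baI sym by (auto dest: symD)
    define U where "U = insert a S"
    define N where "N = {c \<in> U. (a, c) \<in> I}"
    have UsubSg: "U \<subseteq> Sg" unfolding U_def using aS less.prems by auto
    have finU: "finite U" unfolding U_def using finS by simp
    have aU: "a \<in> U" unfolding U_def by simp
    have NS: "N \<subseteq> S"
    proof
      fix c assume "c \<in> N"
      hence "c \<in> U" "(a, c) \<in> I" unfolding N_def by auto
      moreover have "c \<noteq> a" using \<open>(a, c) \<in> I\<close> irr by auto
      ultimately show "c \<in> S" unfolding U_def by simp
    qed
    have bN: "b \<notin> N" unfolding N_def using abI by simp
    have NpS: "N \<subset> S" using NS bN ba(1) by blast
    have cardN: "card N < card S" by (rule psubset_card_mono[OF finS NpS])
    have NpSg: "N \<subset> Sg" using NpS less.prems by blast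
    have IH: "mobius N I r > 0" unfolding r_def by (rule less.hyps[OF cardN NpSg])
    have del: "mobius U I r = mobius (U - {a}) I r - r * mobius N I r"
      unfolding N_def by (rule mobius_delete[OF sym irr finU aU])
    have US: "U - {a} = S" unfolding U_def using ba(2) by auto
    have nn: "mobius U I r \<ge> 0" unfolding r_def by (rule nonneg_fact[OF sym irr fin ne UsubSg])
    have "r * mobius N I r > 0" using r0 IH by simp
    then show "mobius S I r > 0" using del US nn by simp
  qed
qed

theorem proposition8:
  fixes \<Sigma> \<Sigma>' :: "'a set" and I :: "('a \<times> 'a) set"
  assumes "trace_monoid \<Sigma> I" and "\<Sigma> \<noteq> {}" and "\<Sigma>' \<subseteq> \<Sigma>"
  shows "(char_root \<Sigma> I \<le> char_root \<Sigma>' (restr \<Sigma>' I) \<and>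
          (char_root \<Sigma> I < char_root \<Sigma>' (restr \<Sigma>' I) \<longleftrightarrow>
             mobius \<Sigma>' (restr \<Sigma>' I) (real_of_ereal (char_root \<Sigma> I)) > 0))
         \<and> (spectral_property \<Sigma> I \<longleftrightarrow> irreducible_tm \<Sigma> I)"
proof -
  have fin: "finite \<Sigma>" and IS: "I \<subseteq> \<Sigma> \<times> \<Sigma>" and irr: "\<forall>a. (a, a) \<notin> I" and sym: "sym I"
    using assms(1) unfolding trace_monoid_def by auto
  have ne: "\<Sigma> \<noteq> {}" by (rule assms(2))
  have rI: "restr \<Sigma> I = I" unfolding restr_def using IS by blast
  have cr: "char_root \<Sigma> I = char_root \<Sigma> (restr \<Sigma> I)" using rI by simp
  define r where "r = real_of_ereal (char_root \<Sigma> (restr \<Sigma> I))"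
  have P1a: "char_root \<Sigma> I \<le> char_root \<Sigma>' (restr \<Sigma>' I)"
    unfolding cr by (rule char_root_mono[OF sym irr fin assms(3)])
  have P1b: "char_root \<Sigma> I < char_root \<Sigma>' (restr \<Sigma>' I) \<longleftrightarrow>
             mobius \<Sigma>' (restr \<Sigma>' I) (real_of_ereal (char_root \<Sigma> I)) > 0"
    unfolding cr mobius_restr by (rule part1_iff[OF sym irr fin ne assms(3)])
  have spec_iff: "spectral_property \<Sigma> I \<longleftrightarrow> (\<forall>a\<in>\<Sigma>. mobius (\<Sigma> - {a}) I r > 0)"
    unfolding spectral_property_def cr r_def
  proof (intro ball_cong[OF refl])
    fix a assume "a \<in> \<Sigma>"
    show "(char_root \<Sigma> (restr \<Sigma> I) < char_root (\<Sigma> - {a}) (restr (\<Sigma> - {a}) I)) =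
          (0 < mobius (\<Sigma> - {a}) I (real_of_ereal (char_root \<Sigma> (restr \<Sigma> I))))"
      by (rule part1_iff[OF sym irr fin ne]) auto
  qed
  have P2: "spectral_property \<Sigma> I \<longleftrightarrow> irreducible_tm \<Sigma> I"
  proof
    assume conn: "irreducible_tm \<Sigma> I"
    have "\<forall>a\<in>\<Sigma>. mobius (\<Sigma> - {a}) I r > 0"
    proof
      fix a assume "a \<in> \<Sigma>"
      hence "\<Sigma> - {a} \<subset> \<Sigma>" by auto
      thus "mobius (\<Sigma> - {a}) I r > 0" unfolding r_def by (rule irr_pos[OF sym irr fin ne IS conn])
    qed
    thus "spectral_property \<Sigma> I" using spec_iff by simp
  next
    assume sp: "spectral_property \<Sigma> I"
    show "irreducible_tm \<Sigma> I"
    proof (rule ccontr)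
      assume "\<not> irreducible_tm \<Sigma> I"
      then obtain a0 b0 where ab0: "a0 \<in> \<Sigma>" "b0 \<in> \<Sigma>" "(a0, b0) \<notin> (\<Sigma> \<times> \<Sigma> - I)\<^sup>*"
        unfolding irreducible_tm_def by blast
      define D where "D = \<Sigma> \<times> \<Sigma> - I"
      define A where "A = {x \<in> \<Sigma>. (a0, x) \<in> D\<^sup>*}"
      define B where "B = \<Sigma> - A"
      have a0A: "a0 \<in> A" unfolding A_def using ab0(1) by simp
      have b0B: "b0 \<in> B" unfolding B_def A_def D_def using ab0 by simp
      have cross: "\<forall>x\<in>A. \<forall>y\<in>B. (x, y) \<in> I"
      proof (intro ballI)
        fix x y assume x: "x \<in> A" and y: "y \<in> B"
        show "(x, y) \<in> I"
        proof (rule ccontr)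
          assume "(x, y) \<notin> I"
          hence "(x, y) \<in> D" unfolding D_def using x y unfolding A_def B_def by auto
          moreover have "(a0, x) \<in> D\<^sup>*" using x unfolding A_def by simp
          ultimately have "(a0, y) \<in> D\<^sup>*" by (rule rtrancl_into_rtrancl[rotated])
          thus False using y unfolding A_def B_def by simp
        qed
      qed
      have AB: "\<Sigma> = A \<union> B" "A \<inter> B = {}" unfolding B_def A_def by auto
      have finA: "finite A" and finB: "finite B" using fin AB(1) by (metis finite_Un)+
      have "mobius \<Sigma> I r = 0" unfolding r_def by (rule root_fact[OF sym irr fin ne])
      moreover have "mobius \<Sigma> I r = mobius A I r * mobius B I r"
        unfolding AB(1) by (rule mobius_product[OF sym finA finB AB(2) cross])
      ultimately have "mobius A I r = 0 \<or> mobius B I r = 0" by simp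
      then show False
      proof
        assume mA: "mobius A I r = 0"
        have eq: "\<Sigma> - {b0} = A \<union> (B - {b0})" using AB b0B by auto
        have "mobius (\<Sigma> - {b0}) I r = mobius A I r * mobius (B - {b0}) I r"
          unfolding eq by (rule mobius_product) (use sym finA finB AB(2) cross in auto)
        hence "mobius (\<Sigma> - {b0}) I r = 0" using mA by simp
        moreover have "b0 \<in> \<Sigma>" by (rule ab0(2))
        ultimately show False using sp spec_iff by auto
      next
        assume mB: "mobius B I r = 0"
        have eq: "\<Sigma> - {a0} = (A - {a0}) \<union> B" using AB a0A by auto
        have "mobius (\<Sigma> - {a0}) I r = mobius (A - {a0}) I r * mobius B I r"
          unfolding eq by (rule mobius_product) (use sym finA finB AB(2) cross in auto)
        hence "mobius (\<Sigma> - {a0}) I r = 0" using mB by simp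
        moreover have "a0 \<in> \<Sigma>" by (rule ab0(1))
        ultimately show False using sp spec_iff by auto
      qed
    qed
  qed
  show ?thesis using P1a P1b P2 by blast
qed


end
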